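(* If $(T,R_T)$ is a rooted forest and $(F,R_F)\in \mathcal{L}(T)$, then $\rho(T,R_T)\le \rho(F,R_F)$.
   Context: A rooted graph $(F,R)$ is a graph $F$ with a set $R\subsetneq V(F)$ of roots; a rooted forest is a rooted graph whose graph is a forest. For $S\subseteq V(F)$, $e_S(F)$ is the number of edges of $F$ incident to a vertex of $S$, and $\rho(F,R)=\min_{\emptyset\ne S\subseteq V(F)\setminus R} e_S(F)/|S|$. For rooted graphs $(F,R),(F',R')$, a map $\phi:V(F)\to V(F')$ is a local isomorphism if (a) $\phi$ is surjective and $\phi(R)\subseteq R'$, (b) every edge $e\in E(F)$ has $\phi(e)\in E(F')$, and (c) every two distinct edges $e,f\in E(F)$ with $e\cap f\ne\emptyset$ satisfy $\phi(e)\ne\phi(f)$. $\mathcal{L}(T)$ denotes the set of rooted graphs $(F',R')$ such that there is a local isomorphism from $(T,R_T)$ to $(F',R')$. *)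

theory Defs
  imports Complex_Main
begin

definition graph :: "'a set \<Rightarrow> 'a set set \<Rightarrow> bool" where
  "graph V E \<longleftrightarrow> finite V \<and> (\<forall>e\<in>E. \<exists>u v. e = {u, v} \<and> u \<noteq> v \<and> u \<in> V \<and> v \<in> V)"

definition is_cycle :: "'a set \<Rightarrow> 'a set set \<Rightarrow> 'a list \<Rightarrow> bool" where
  "is_cycle V E cs \<longleftrightarrow> length cs \<ge> 3 \<and> distinct cs \<and> set cs \<subseteq> V \<and>
     (\<forall>i < length cs. {cs ! i, cs ! ((i + 1) mod length cs)} \<in> E)"

definition forest :: "'a set \<Rightarrow> 'a set set \<Rightarrow> bool" where
  "forest V E \<longleftrightarrow> graph V E \<and> (\<nexists>cs. is_cycle V E cs)"

definition rooted_graph :: "'a set \<Rightarrow> 'a set set \<Rightarrow> 'a set \<Rightarrow> bool" where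
  "rooted_graph V E R \<longleftrightarrow> graph V E \<and> R \<subset> V"

definition rooted_forest :: "'a set \<Rightarrow> 'a set set \<Rightarrow> 'a set \<Rightarrow> bool" where
  "rooted_forest V E R \<longleftrightarrow> forest V E \<and> R \<subset> V"

definition e_S :: "'a set set \<Rightarrow> 'a set \<Rightarrow> nat" where
  "e_S E S = card {e \<in> E. e \<inter> S \<noteq> {}}"

definition rho :: "'a set \<Rightarrow> 'a set set \<Rightarrow> 'a set \<Rightarrow> real" where
  "rho V E R = Min {real (e_S E S) / real (card S) | S. S \<noteq> {} \<and> S \<subseteq> V - R}"

definition local_iso ::
  "'a set \<Rightarrow> 'a set set \<Rightarrow> 'a set \<Rightarrow> 'b set \<Rightarrow> 'b set set \<Rightarrow> 'b set \<Rightarrow> ('a \<Rightarrow> 'b) \<Rightarrow> bool" where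
  "local_iso V E R V' E' R' \<phi> \<longleftrightarrow>
     \<phi> ` V = V' \<and> \<phi> ` R \<subseteq> R' \<and>
     (\<forall>e\<in>E. \<phi> ` e \<in> E') \<and>
     (\<forall>e\<in>E. \<forall>f\<in>E. e \<noteq> f \<and> e \<inter> f \<noteq> {} \<longrightarrow> \<phi> ` e \<noteq> \<phi> ` f)"

definition in_L ::
  "'a set \<Rightarrow> 'a set set \<Rightarrow> 'a set \<Rightarrow> 'b set \<Rightarrow> 'b set set \<Rightarrow> 'b set \<Rightarrow> bool" where
  "in_L VT ET RT V' E' R' \<longleftrightarrow> rooted_graph V' E' R' \<and> (\<exists>\<phi>. local_iso VT ET RT V' E' R' \<phi>)"

end

theory Submission
  imports Defs
begin

lemma card_filter_sum:
  assumes "finite A"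
  shows "real (card {x\<in>A. P x}) = (\<Sum>x\<in>A. if P x then 1 else 0)"
proof -
  have "real (card {x\<in>A. P x}) = (\<Sum>x\<in>{x\<in>A. P x}. 1)" by simp
  also have "\<dots> = (\<Sum>x\<in>A. if P x then 1 else 0)"
    using sum.inter_filter[OF assms, of "\<lambda>_. (1::real)" P] by simp
  finally show ?thesis .
qed

lemma tele_aux:
  assumes "1 \<le> m" "m \<le> N"
  shows "(\<Sum>k\<in>{m..<N}. 1/real k - 1/real (k+1)) = 1/real m - 1/real N"
  using assms(2)
proof (induction N rule: dec_induct)
  case base
  then show ?case by simp
next
  case (step N)
  then show ?case by simp
qed

lemma tele:
  fixes N :: nat
  defines "lam \<equiv> (\<lambda>k. if k = N then 1/real N else 1/real k - 1/real (k+1))"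
  assumes "1 \<le> m" "m \<le> N"
  shows "(\<Sum>k\<in>{1..N}. lam k * (if m \<le> k then 1 else 0)) = 1/real m"
proof -
  have "(\<Sum>k\<in>{1..N}. lam k * (if m \<le> k then 1 else 0)) = (\<Sum>k\<in>{m..N}. lam k)"
    using assms(2,3) by (intro sum.mono_neutral_cong_right) auto
  also have "{m..N} = insert N {m..<N}" using assms by auto
  also have "(\<Sum>k\<in>insert N {m..<N}. lam k) = lam N + (\<Sum>k\<in>{m..<N}. lam k)" by simp
  also have "(\<Sum>k\<in>{m..<N}. lam k) = (\<Sum>k\<in>{m..<N}. 1/real k - 1/real (k+1))"
    by (rule sum.cong) (auto simp: lam_def)
  also have "\<dots> = 1/real m - 1/real N" using tele_aux assms by blast
  finally show ?thesis by (simp add: lam_def)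
qed

lemma key:
  fixes VT :: "'a set" and ET :: "'a set set" and RT :: "'a set"
    and VF :: "'b set" and EF :: "'b set set" and RF :: "'b set"
  assumes gT: "graph VT ET" and RTV: "RT \<subset> VT" and gF: "graph VF EF"
    and li: "local_iso VT ET RT VF EF RF \<phi>"
    and Sne: "S \<noteq> {}" and Ssub: "S \<subseteq> VF - RF"
  shows "\<exists>S'. S' \<noteq> {} \<and> S' \<subseteq> VT - RT \<and>
           real (e_S ET S') / real (card S') \<le> real (e_S EF S) / real (card S)"
proof -
  define W where "W = {v\<in>VT. \<phi> v \<in> S}"
  define n where "n u = card {v\<in>VT. \<phi> v = u}" for u
  define N where "N = card VT"
  define A where "A k = {v\<in>W. n (\<phi> v) \<le> k}" for k
  define lam where "lam = (\<lambda>k. if k = N then 1/real N else 1/real k - 1/real (k+1))"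
  define c where "c = real (e_S EF S) / real (card S)"
  have finVT: "finite VT" using gT by (simp add: graph_def)
  have finVF: "finite VF" using gF by (simp add: graph_def)
  have edge: "\<exists>u v. e = {u, v} \<and> u \<noteq> v \<and> u \<in> VT \<and> v \<in> VT" if "e \<in> ET" for e
    using gT that unfolding graph_def by (elim conjE) (erule bspec)
  have ETsub: "e \<subseteq> VT" if "e \<in> ET" for e
    using edge[OF that] by auto
  have finE: "finite e" if "e \<in> ET" for e
    using edge[OF that] by auto
  have finET: "finite ET"
    by (rule finite_subset[of _ "Pow VT"]) (use ETsub finVT in auto)
  have finS: "finite S" using Ssub finVF finite_subset by blast
  have surj: "\<phi> ` VT = VF" and phiR: "\<phi> ` RT \<subseteq> RF"
    and phiE: "\<And>e. e \<in> ET \<Longrightarrow> \<phi> ` e \<in> EF"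
    and phiC: "\<And>e f. e \<in> ET \<Longrightarrow> f \<in> ET \<Longrightarrow> e \<noteq> f \<Longrightarrow> e \<inter> f \<noteq> {} \<Longrightarrow> \<phi> ` e \<noteq> \<phi> ` f"
    using li unfolding local_iso_def by (elim conjE; simp)+
  have nS: "1 \<le> n u \<and> n u \<le> N" if "u \<in> S" for u
  proof -
    from that Ssub surj obtain v where "v \<in> VT" "\<phi> v = u" by blast
    hence "{v\<in>VT. \<phi> v = u} \<noteq> {}" by blast
    moreover have "finite {v\<in>VT. \<phi> v = u}" using finVT by simp
    ultimately have "1 \<le> n u" unfolding n_def by (simp add: Suc_le_eq card_gt_0_iff)
    moreover have "n u \<le> N" unfolding n_def N_def by (rule card_mono[OF finVT]) auto
    ultimately show ?thesis by simp
  qed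
  have Npos: "1 \<le> N"
  proof -
    from Sne obtain u where "u \<in> S" by blast
    thus ?thesis using nS by fastforce
  qed
  have finW: "finite W" using finVT unfolding W_def by simp
  have AN: "A N = W" unfolding A_def W_def using nS by auto
  have Wne: "W \<noteq> {}"
  proof -
    from Sne obtain u where "u \<in> S" by blast
    with Ssub surj obtain v where "v \<in> VT" "\<phi> v = u" by blast
    thus ?thesis unfolding W_def using \<open>u \<in> S\<close> by blast
  qed
  have Asub: "A k \<subseteq> VT - RT" for k
  proof
    fix v assume "v \<in> A k"
    hence "v \<in> VT" "\<phi> v \<in> S" unfolding A_def W_def by auto
    moreover have "v \<notin> RT"
    proof
      assume "v \<in> RT"
      hence "\<phi> v \<in> RF" using phiR by blast
      thus False using \<open>\<phi> v \<in> S\<close> Ssub by blast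
    qed
    ultimately show "v \<in> VT - RT" by blast
  qed
  have lampos: "lam k > 0" if "k \<in> {1..N}" for k
    using that Npos by (auto simp: lam_def field_simps intro!: add_pos_pos)
  have nW: "1 \<le> n (\<phi> v) \<and> n (\<phi> v) \<le> N" if "v \<in> W" for v
    using nS that unfolding W_def by blast
  have teleN: "(\<Sum>k\<in>{1..N}. lam k * (if m \<le> k then 1 else 0)) = 1 / real m"
    if "1 \<le> m" "m \<le> N" for m
    using tele[OF that] unfolding lam_def by simp
  have sum1: "(\<Sum>k\<in>{1..N}. lam k * real (card (A k))) = real (card S)"
  proof -
    have cardA: "real (card (A k)) = (\<Sum>v\<in>W. if n (\<phi> v) \<le> k then 1 else 0)" for k
      unfolding A_def by (rule card_filter_sum[OF finW])
    have "(\<Sum>k\<in>{1..N}. lam k * real (card (A k)))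
        = (\<Sum>k\<in>{1..N}. \<Sum>v\<in>W. lam k * (if n (\<phi> v) \<le> k then 1 else 0))"
      by (simp add: cardA sum_distrib_left)
    also have "\<dots> = (\<Sum>v\<in>W. \<Sum>k\<in>{1..N}. lam k * (if n (\<phi> v) \<le> k then 1 else 0))"
      by (rule sum.swap)
    also have "\<dots> = (\<Sum>v\<in>W. 1 / real (n (\<phi> v)))"
      by (rule sum.cong) (use teleN nW in auto)
    also have "\<dots> = (\<Sum>u\<in>\<phi> ` W. \<Sum>v\<in>{v\<in>W. \<phi> v = u}. 1 / real (n (\<phi> v)))"
      by (rule sum.image_gen[OF finW])
    also have "\<phi> ` W = S"
      using Ssub surj unfolding W_def by blast
    also have "(\<Sum>u\<in>S. \<Sum>v\<in>{v\<in>W. \<phi> v = u}. 1 / real (n (\<phi> v))) = (\<Sum>u\<in>S. 1)"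
    proof (rule sum.cong)
      fix u assume u: "u \<in> S"
      have eq: "{v\<in>W. \<phi> v = u} = {v\<in>VT. \<phi> v = u}" using u unfolding W_def by auto
      have "(\<Sum>v\<in>{v\<in>W. \<phi> v = u}. 1 / real (n (\<phi> v))) = (\<Sum>v\<in>{v\<in>VT. \<phi> v = u}. 1 / real (n u))"
        unfolding eq by (rule sum.cong) auto
      also have "\<dots> = real (n u) * (1 / real (n u))" by (simp add: n_def)
      also have "\<dots> = 1" using nS[OF u] by simp
      finally show "(\<Sum>v\<in>{v\<in>W. \<phi> v = u}. 1 / real (n (\<phi> v))) = 1" .
    qed simp
    finally show ?thesis by simp
  qed
  define m where "m f = Min (n ` (f \<inter> S))" for f
  define ET' where "ET' = {e\<in>ET. e \<inter> W \<noteq> {}}"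
  have finET': "finite ET'" using finET unfolding ET'_def by simp
  have WS: "(e \<inter> W \<noteq> {}) = (\<phi> ` e \<inter> S \<noteq> {})" if "e \<in> ET" for e
    using ETsub[OF that] unfolding W_def by auto
  have finimg: "finite (\<phi> ` e \<inter> S)" if "e \<in> ET" for e
    using finE[OF that] by simp
  have iffA: "(e \<inter> A k \<noteq> {}) = (e \<in> ET' \<and> m (\<phi> ` e) \<le> k)" if e: "e \<in> ET" for e k
  proof -
    have "(e \<inter> A k \<noteq> {}) = (\<exists>u\<in>\<phi> ` e \<inter> S. n u \<le> k)"
      using ETsub[OF e] unfolding A_def W_def by auto
    also have "\<dots> = (\<phi> ` e \<inter> S \<noteq> {} \<and> m (\<phi> ` e) \<le> k)"
    proof (cases "\<phi> ` e \<inter> S = {}")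
      case True
      then show ?thesis by simp
    next
      case False
      then show ?thesis unfolding m_def using finimg[OF e]
        by (simp add: Min_le_iff)
    qed
    also have "\<dots> = (e \<in> ET' \<and> m (\<phi> ` e) \<le> k)"
      using WS[OF e] e unfolding ET'_def by auto
    finally show ?thesis .
  qed
  have mbound: "1 \<le> m (\<phi> ` e) \<and> m (\<phi> ` e) \<le> N" if e: "e \<in> ET'" for e
  proof -
    have eE: "e \<in> ET" and ne: "\<phi> ` e \<inter> S \<noteq> {}" using e WS unfolding ET'_def by auto
    have "m (\<phi> ` e) \<in> n ` (\<phi> ` e \<inter> S)"
      unfolding m_def by (rule Min_in) (use finimg[OF eE] ne in auto)
    then obtain u where "u \<in> S" "m (\<phi> ` e) = n u" by blast
    thus ?thesis using nS by simp
  qed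
  have eA: "real (e_S ET (A k)) = (\<Sum>e\<in>ET'. if m (\<phi> ` e) \<le> k then 1 else 0)" for k
  proof -
    have "{e\<in>ET. e \<inter> A k \<noteq> {}} = {e\<in>ET'. m (\<phi> ` e) \<le> k}"
      using iffA unfolding ET'_def by auto
    thus ?thesis unfolding e_S_def using card_filter_sum[OF finET'] by simp
  qed
  have sum2: "(\<Sum>k\<in>{1..N}. lam k * real (e_S ET (A k))) \<le> real (e_S EF S)"
  proof -
    have "(\<Sum>k\<in>{1..N}. lam k * real (e_S ET (A k)))
        = (\<Sum>k\<in>{1..N}. \<Sum>e\<in>ET'. lam k * (if m (\<phi> ` e) \<le> k then 1 else 0))"
      by (simp add: eA sum_distrib_left)
    also have "\<dots> = (\<Sum>e\<in>ET'. \<Sum>k\<in>{1..N}. lam k * (if m (\<phi> ` e) \<le> k then 1 else 0))"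
      by (rule sum.swap)
    also have "\<dots> = (\<Sum>e\<in>ET'. 1 / real (m (\<phi> ` e)))"
      by (rule sum.cong) (use teleN mbound in auto)
    also have "\<dots> = (\<Sum>f\<in>(\<lambda>e. \<phi> ` e) ` ET'. \<Sum>e\<in>{e\<in>ET'. \<phi> ` e = f}. 1 / real (m (\<phi> ` e)))"
      by (rule sum.image_gen[OF finET'])
    also have "\<dots> \<le> (\<Sum>f\<in>(\<lambda>e. \<phi> ` e) ` ET'. 1)"
    proof (rule sum_mono)
      fix f assume "f \<in> (\<lambda>e. \<phi> ` e) ` ET'"
      then obtain e0 where e0: "e0 \<in> ET'" "f = \<phi> ` e0" by blast
      have e0E: "e0 \<in> ET" using e0 unfolding ET'_def by simp
      have ne: "f \<inter> S \<noteq> {}" using e0 WS[OF e0E] unfolding ET'_def by simp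
      have "m f \<in> n ` (f \<inter> S)"
        unfolding m_def by (rule Min_in) (use finimg[OF e0E] ne e0 in auto)
      then obtain u where u: "u \<in> f" "u \<in> S" "m f = n u" by blast
      define G where "G = {e\<in>ET'. \<phi> ` e = f}"
      define g where "g e = (SOME v. v \<in> e \<and> \<phi> v = u)" for e
      have gG: "g e \<in> e \<and> \<phi> (g e) = u" if "e \<in> G" for e
      proof -
        have "\<exists>v. v \<in> e \<and> \<phi> v = u" using that u(1) unfolding G_def by auto
        thus ?thesis unfolding g_def by (rule someI_ex)
      qed
      have inj: "inj_on g G"
      proof (rule inj_onI)
        fix e e' assume a: "e \<in> G" "e' \<in> G" "g e = g e'"
        have "g e \<in> e \<inter> e'" using gG[OF a(1)] gG[OF a(2)] a(3) by simp
        hence "e \<inter> e' \<noteq> {}" by blast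
        moreover have "\<phi> ` e = \<phi> ` e'" "e \<in> ET" "e' \<in> ET"
          using a unfolding G_def ET'_def by auto
        ultimately
        show "e = e'" using phiC by blast
      qed
      have "g ` G \<subseteq> {v\<in>VT. \<phi> v = u}"
        using gG ETsub unfolding G_def ET'_def by auto
      hence "card G \<le> n u" unfolding n_def
        using card_inj_on_le[OF inj] finVT by simp
      hence cG: "real (card G) \<le> real (m f)" using u by simp
      have mpos: "real (m f) \<ge> 1" using mbound[OF e0(1)] e0 by simp
      have "(\<Sum>e\<in>G. 1 / real (m (\<phi> ` e))) = (\<Sum>e\<in>G. 1 / real (m f))"
        by (rule sum.cong) (auto simp: G_def)
      also have "\<dots> = real (card G) / real (m f)" by simp
      also have "\<dots> \<le> 1" using cG mpos by simp
      finally show "(\<Sum>e\<in>{e\<in>ET'. \<phi> ` e = f}. 1 / real (m (\<phi> ` e))) \<le> 1"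
        unfolding G_def .
    qed
    also have "\<dots> = real (card ((\<lambda>e. \<phi> ` e) ` ET'))" by simp
    also have "\<dots> \<le> real (e_S EF S)"
    proof -
      have "(\<lambda>e. \<phi> ` e) ` ET' \<subseteq> {f\<in>EF. f \<inter> S \<noteq> {}}"
      proof (rule image_subsetI)
        fix e assume "e \<in> ET'"
        hence "e \<in> ET" "e \<inter> W \<noteq> {}" unfolding ET'_def by auto
        thus "\<phi> ` e \<in> {f\<in>EF. f \<inter> S \<noteq> {}}" using phiE WS by simp
      qed
      moreover have "finite {f\<in>EF. f \<inter> S \<noteq> {}}"
      proof -
        have "f \<subseteq> VF" if "f \<in> EF" for f
        proof -
          have "\<exists>u v. f = {u, v} \<and> u \<noteq> v \<and> u \<in> VF \<and> v \<in> VF"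
            using gF that unfolding graph_def by (elim conjE) (erule bspec)
          thus ?thesis by auto
        qed
        hence "EF \<subseteq> Pow VF" by blast
        hence "finite EF" using finVF finite_subset by blast
        thus ?thesis by simp
      qed
      ultimately show ?thesis unfolding e_S_def by (simp add: card_mono)
    qed
    finally show ?thesis .
  qed
  show ?thesis
  proof (rule ccontr)
    assume H: "\<not> ?thesis"
    have Spos: "real (card S) > 0" using Sne finS by (simp add: card_gt_0_iff)
    have le: "lam k * (c * real (card (A k))) \<le> lam k * real (e_S ET (A k))"
      if "k \<in> {1..N}" for k
    proof (cases "A k = {}")
      case True
      then show ?thesis by (simp add: e_S_def)
    next
      case False
      have "A k \<subseteq> W" unfolding A_def by blast
      hence "finite (A k)" using finW finite_subset by blast
      hence "real (card (A k)) > 0" using False by (simp add: card_gt_0_iff)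
      moreover have "\<not> real (e_S ET (A k)) / real (card (A k)) \<le> c"
        using H False Asub unfolding c_def by blast
      ultimately have "c * real (card (A k)) < real (e_S ET (A k))"
        by (simp add: field_simps)
      then show ?thesis using lampos[OF that] by simp
    qed
    have lt: "lam N * (c * real (card (A N))) < lam N * real (e_S ET (A N))"
    proof -
      have "finite (A N)" using AN finW by simp
      hence "real (card (A N)) > 0" using AN Wne by (simp add: card_gt_0_iff)
      moreover have "\<not> real (e_S ET (A N)) / real (card (A N)) \<le> c"
        using H AN Wne Asub unfolding c_def by blast
      ultimately have "c * real (card (A N)) < real (e_S ET (A N))"
        by (simp add: field_simps)
      then show ?thesis using lampos[of N] Npos by simp
    qed
    have "(\<Sum>k\<in>{1..N}. lam k * (c * real (card (A k)))) < (\<Sum>k\<in>{1..N}. lam k * real (e_S ET (A k)))"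
      by (rule sum_strict_mono_ex1) (use le lt Npos in auto)
    also have "\<dots> \<le> real (e_S EF S)" by (rule sum2)
    also have "\<dots> = c * real (card S)" unfolding c_def using Spos by simp
    also have "\<dots> = (\<Sum>k\<in>{1..N}. lam k * (c * real (card (A k))))"
      unfolding sum1[symmetric] sum_distrib_left by (simp add: algebra_simps)
    finally show False by simp
  qed
qed

lemma rho_set_finite:
  assumes "finite V"
  shows "finite {real (e_S E S) / real (card S) | S. S \<noteq> {} \<and> S \<subseteq> V - R}"
proof -
  have "finite {S. S \<noteq> {} \<and> S \<subseteq> V - R}"
    by (rule finite_subset[of _ "Pow V"]) (use assms in auto)
  thus ?thesis by (rule finite_image_set)
qed

theorem proposition2p4:
  fixes VT :: "'a set" and ET :: "'a set set" and RT :: "'a set"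
    and VF :: "'b set" and EF :: "'b set set" and RF :: "'b set"
  assumes "rooted_forest VT ET RT"
    and "in_L VT ET RT VF EF RF"
  shows "rho VT ET RT \<le> rho VF EF RF"
proof -
  have gT: "graph VT ET" and RTV: "RT \<subset> VT"
    using assms(1) unfolding rooted_forest_def forest_def by auto
  have gF: "graph VF EF" and RFV: "RF \<subset> VF"
    using assms(2) unfolding in_L_def rooted_graph_def by auto
  obtain \<phi> where li: "local_iso VT ET RT VF EF RF \<phi>"
    using assms(2) unfolding in_L_def by blast
  have finVT: "finite VT" using gT by (simp add: graph_def)
  have finVF: "finite VF" using gF by (simp add: graph_def)
  let ?setF = "{real (e_S EF S) / real (card S) | S. S \<noteq> {} \<and> S \<subseteq> VF - RF}"
  let ?setT = "{real (e_S ET S) / real (card S) | S. S \<noteq> {} \<and> S \<subseteq> VT - RT}"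
  have "?setF \<noteq> {}"
  proof -
    have "VF - RF \<noteq> {}" using RFV by blast
    thus ?thesis by blast
  qed
  hence "rho VF EF RF \<in> ?setF"
    unfolding rho_def by (rule Min_in[OF rho_set_finite[OF finVF], rotated])
  then obtain S where S: "S \<noteq> {}" "S \<subseteq> VF - RF"
    and rF: "rho VF EF RF = real (e_S EF S) / real (card S)" by blast
  obtain S' where S': "S' \<noteq> {}" "S' \<subseteq> VT - RT"
    and le: "real (e_S ET S') / real (card S') \<le> real (e_S EF S) / real (card S)"
    using key[OF gT RTV gF li S] by blast
  have "rho VT ET RT \<le> real (e_S ET S') / real (card S')"
    unfolding rho_def by (rule Min_le[OF rho_set_finite[OF finVT]]) (use S' in blast)
  thus ?thesis using le rF by simp
qed

end
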